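(* Let $4.999\le r\le 5$, $1\le\theta\le 2.2$, and $\delta\in\mathbb{R}$. Define $u_0=u_1=1$, $u_2=\theta+\delta$, and $u_n=(r-\theta)u_{n-1}-(r-2\theta)u_{n-2}-\theta u_{n-3}$ for $n\ge 3$. Let $q(x)=1-(r-\theta)x+(r-2\theta)x^2+\theta x^3$, and suppose the roots $\alpha,\beta,\gamma$ of $q$ are real with $\alpha<-1<0<\gamma<\beta<1$. If $\theta+\delta<\frac{1}{1-\gamma}$, then $u_{n+1}-u_n\to-\infty$ as $n\to\infty$. *)

theory Defs
  imports "HOL-Analysis.Analysis"
begin

fun useq :: "real \<Rightarrow> real \<Rightarrow> real \<Rightarrow> nat \<Rightarrow> real" where
  "useq r \<theta> \<delta> 0 = 1"
| "useq r \<theta> \<delta> (Suc 0) = 1"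
| "useq r \<theta> \<delta> (Suc (Suc 0)) = \<theta> + \<delta>"
| "useq r \<theta> \<delta> (Suc (Suc (Suc n))) =
     (r - \<theta>) * useq r \<theta> \<delta> (Suc (Suc n)) - (r - 2*\<theta>) * useq r \<theta> \<delta> (Suc n)
     - \<theta> * useq r \<theta> \<delta> n"

definition qpoly :: "real \<Rightarrow> real \<Rightarrow> real \<Rightarrow> real" where
  "qpoly r \<theta> x = 1 - (r - \<theta>) * x + (r - 2*\<theta>) * x^2 + \<theta> * x^3"

end

theory Submission
  imports Defs
begin

lemma vand:
  fixes x y z D0 D1 D2 :: real
  assumes h: "x - y \<noteq> 0" "x - z \<noteq> 0" "y - z \<noteq> 0"
  shows "(D2 - (y+z)*D1 + y*z*D0)/((x-y)*(x-z)) * x^k + (D2 - (x+z)*D1 + x*z*D0)/((y-x)*(y-z)) * y^k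
     + (D2 - (x+y)*D1 + x*y*D0)/((z-x)*(z-y)) * z^k = (if k = 0 then D0 else if k = 1 then D1 else if k = 2 then D2 else
       (D2 - (y+z)*D1 + y*z*D0)/((x-y)*(x-z)) * x^k + (D2 - (x+z)*D1 + x*z*D0)/((y-x)*(y-z)) * y^k
     + (D2 - (x+y)*D1 + x*y*D0)/((z-x)*(z-y)) * z^k)"
proof -
  have h2: "y - x \<noteq> 0" "z - x \<noteq> 0" "z - y \<noteq> 0" using h by auto
  show ?thesis using h h2 
    by (auto simp: divide_simps power2_eq_square) (simp_all add: algebra_simps)
qed

lemma pow_at_top:
  fixes L :: real assumes "1 < L"
  shows "filterlim (\<lambda>n. L ^ n) at_top sequentially"
proof -
  have "filterlim (\<lambda>n. norm (L ^ n)) at_top sequentially"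
    by (rule filterlim_at_infinity_imp_norm_at_top[OF filterlim_realpow_sequentially_gt1]) (use assms in simp)
  moreover have "\<And>n. norm (L ^ n) = L ^ n" using assms by (simp add: abs_of_pos)
  ultimately show ?thesis by simp
qed

theorem mainTheorem8:
  fixes r \<theta> \<delta> \<alpha> \<beta> \<gamma> :: real
  assumes "4.999 \<le> r" "r \<le> 5" "1 \<le> \<theta>" "\<theta> \<le> 2.2"
    and "qpoly r \<theta> \<alpha> = 0" "qpoly r \<theta> \<beta> = 0" "qpoly r \<theta> \<gamma> = 0"
    and "\<alpha> < -1" "0 < \<gamma>" "\<gamma> < \<beta>" "\<beta> < 1"
    and "\<theta> + \<delta> < 1 / (1 - \<gamma>)"
  shows "filterlim (\<lambda>n. useq r \<theta> \<delta> (Suc n) - useq r \<theta> \<delta> n) at_bot sequentially"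
proof -
  define u where "u = useq r \<theta> \<delta>"
  define d where "d n = u (Suc n) - u n" for n
  define p where "p x = x^3 - (r-\<theta>)*x^2 + (r-2*\<theta>)*x + \<theta>" for x
  define L where "L = 1/\<gamma>"
  define M where "M = 1/\<beta>"
  define N where "N = 1/\<alpha>"
  have pq: "p (1/x) = qpoly r \<theta> x / x^3" if "x \<noteq> 0" for x
    using that unfolding p_def qpoly_def by (simp add: field_simps power3_eq_cube power2_eq_square)
  have pL: "p L = 0" unfolding L_def using pq[of \<gamma>] assms by simp
  have pM: "p M = 0" unfolding M_def using pq[of \<beta>] assms by simp
  have pN: "p N = 0" unfolding N_def using pq[of \<alpha>] assms by simp
  have L1: "L > M" "M > 1" unfolding L_def M_def using assms by (simp_all add: frac_less2)
  have N1: "N < 0" "N > -1" unfolding N_def using assms by (simp_all add: field_simps)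
  have drec: "d (Suc (Suc (Suc n))) = (r-\<theta>) * d (Suc (Suc n)) - (r-2*\<theta>) * d (Suc n) - \<theta> * d n" for n
    unfolding d_def u_def by (simp add: algebra_simps)
  have prec: "x ^ (Suc (Suc (Suc n))) = (r-\<theta>) * x^(Suc (Suc n)) - (r-2*\<theta>) * x^(Suc n) - \<theta> * x^n"
    if "p x = 0" for x n
  proof -
    have "x^3 = (r-\<theta>)*x^2 - (r-2*\<theta>)*x - \<theta>" using that unfolding p_def by simp
    hence "x^3 * x^n = ((r-\<theta>)*x^2 - (r-2*\<theta>)*x - \<theta>) * x^n" by simp
    thus ?thesis by (simp add: algebra_simps power2_eq_square power3_eq_cube)
  qed
  define a where "a = (d 2 - (M+N)*d 1 + M*N*d 0)/((L-M)*(L-N))"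
  define b where "b = (d 2 - (L+N)*d 1 + L*N*d 0)/((M-L)*(M-N))"
  define c where "c = (d 2 - (L+M)*d 1 + L*M*d 0)/((N-L)*(N-M))"
  define f where "f n = a*L^n + b*M^n + c*N^n" for n
  have ne: "L - M \<noteq> 0" "L - N \<noteq> 0" "M - N \<noteq> 0" using L1 N1 by auto
  have bk: "f k = (if k = 0 then d 0 else if k = 1 then d 1 else if k = 2 then d 2 else f k)" for k
    unfolding f_def a_def b_def c_def
    by (rule vand[of L M N "d 2" "d 1" "d 0" k]) (use ne in auto)
  have b0: "d 0 = f 0" using bk[of 0] by simp
  have b1: "d 1 = f 1" using bk[of 1] by simp
  have b2: "d 2 = f 2" using bk[of 2] by simp
  have frec: "f (Suc (Suc (Suc n))) = (r-\<theta>) * f (Suc (Suc n)) - (r-2*\<theta>) * f (Suc n) - \<theta> * f n" for n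
    unfolding f_def using prec[OF pL, of n] prec[OF pM, of n] prec[OF pN, of n]
    by (simp only:) (simp add: algebra_simps)
  have "d n = f n \<and> d (Suc n) = f (Suc n) \<and> d (Suc (Suc n)) = f (Suc (Suc n))" for n
  proof (induction n)
    case 0 then show ?case using b0 b1 b2 by (simp add: numeral_2_eq_2)
  next
    case (Suc n) then show ?case using drec[of n] frec[of n] by simp
  qed
  hence dfe: "d n = f n" for n by simp
  have s1: "L + M + N = r - \<theta>"
  proof -
    have e1: "L^2 + L*M + M^2 - (r-\<theta>)*(L+M) + (r-2*\<theta>) = 0"
    proof -
      have "p L - p M = (L - M) * (L^2 + L*M + M^2 - (r-\<theta>)*(L+M) + (r-2*\<theta>))"
        unfolding p_def by (simp add: algebra_simps power2_eq_square power3_eq_cube)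
      thus ?thesis using pL pM ne by simp
    qed
    have e2: "L^2 + L*N + N^2 - (r-\<theta>)*(L+N) + (r-2*\<theta>) = 0"
    proof -
      have "p L - p N = (L - N) * (L^2 + L*N + N^2 - (r-\<theta>)*(L+N) + (r-2*\<theta>))"
        unfolding p_def by (simp add: algebra_simps power2_eq_square power3_eq_cube)
      thus ?thesis using pL pN ne by simp
    qed
    have "(M - N) * (L + M + N - (r - \<theta>)) = 0"
      using e1 e2 by (simp add: algebra_simps power2_eq_square)
    thus ?thesis using ne by simp
  qed
  have d0: "d 0 = 0" unfolding d_def u_def by simp
  have d1: "d 1 = \<theta> + \<delta> - 1" unfolding d_def u_def by simp
  have d2: "d 2 = (r-\<theta>-1)*(\<theta>+\<delta>) - r + \<theta>" unfolding d_def u_def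
    by (simp add: numeral_2_eq_2 algebra_simps)
  have z0: "d 2 - (M+N)*d 1 + M*N*d 0 = (L-1)*(\<theta>+\<delta>) - L"
  proof -
    have "M + N = r - \<theta> - L" using s1 by simp
    hence "d 2 - (M+N)*d 1 + M*N*d 0 = d 2 - (r - \<theta> - L)*(\<theta> + \<delta> - 1)" using d0 d1 by simp
    also have "\<dots> = (L-1)*(\<theta>+\<delta>) - L" unfolding d2 by (simp add: algebra_simps)
    finally show ?thesis .
  qed
  have "\<theta> + \<delta> < L/(L-1)" using assms unfolding L_def by (simp add: field_simps)
  hence "(L-1)*(\<theta>+\<delta>) - L < 0" using L1 by (simp add: field_simps)
  hence aneg: "a < 0" unfolding a_def z0 using L1 N1
    by (simp add: divide_neg_pos mult_pos_pos)
  have lim: "(\<lambda>n. a + b*(M/L)^n + c*(N/L)^n) \<longlonglongrightarrow> a + b*0 + c*0"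
    using L1 N1 by (intro tendsto_intros) (auto simp: abs_if field_simps)
  have "filterlim (\<lambda>n. (a + b*(M/L)^n + c*(N/L)^n) * L^n) at_bot sequentially"
    by (rule filterlim_tendsto_neg_mult_at_bot[OF lim]) (use aneg pow_at_top L1 in auto)
  moreover have "(a + b*(M/L)^n + c*(N/L)^n) * L^n = useq r \<theta> \<delta> (Suc n) - useq r \<theta> \<delta> n" for n
    using dfe[of n] L1 unfolding f_def d_def u_def by (simp add: algebra_simps power_divide)
  ultimately show ?thesis by simp
qed

end
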